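(* For all integers $n\ge0$ and $d\ge1$ there is an $(n+1)\times(n+1)$ real matrix $M$, with rows and columns indexed by $\{0,1,\dots,n\}$, such that $\gamma_2(M)\le d$ and $M_{st}=s-t$ for all $s,t\in\{0,\dots,n\}$ with $|s-t|\le d$.
   Context: For a real matrix $A$, $\gamma_2(A)=\min\{c(X)c(Y): X^{\mathsf T}Y=A\}$, where $c(X)$ denotes the maximum Euclidean norm of a column of $X$. *)

theory Defs
  imports "HOL-Analysis.Analysis"
begin

text \<open>Matrices are represented as functions nat => nat => real together with
explicit dimensions. A k x m matrix X has entries X l i for l < k, i < m.\<close>

text \<open>Maximum Euclidean norm of a column of a k x m matrix X (m >= 1 assumed where used).\<close>
definition colnorm_max :: "nat \<Rightarrow> nat \<Rightarrow> (nat \<Rightarrow> nat \<Rightarrow> real) \<Rightarrow> real" where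
  "colnorm_max k m X = Max ((\<lambda>i. sqrt (\<Sum>l<k. (X l i)\<^sup>2)) ` {..<m})"

definition gamma2 :: "nat \<Rightarrow> nat \<Rightarrow> (nat \<Rightarrow> nat \<Rightarrow> real) \<Rightarrow> real" where
  "gamma2 m n A = Inf {colnorm_max k m X * colnorm_max k n Y | k X Y.
      \<forall>i<m. \<forall>j<n. A i j = (\<Sum>l<k. X l i * Y l j)}"

end

theory Submission
  imports Defs
begin

lemma periodic_sum:
  fixes G :: "nat \<Rightarrow> real"
  assumes per: "\<And>j. G (j + m) = G j"
  shows "(\<Sum>l<m. G (l + a)) = (\<Sum>l<m. G l)"
proof (induction a)
  case 0 then show ?case by simp
next
  case (Suc a)
  have "(\<Sum>l<Suc m. G (l + a)) = G a + (\<Sum>l<m. G (Suc l + a))"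
    by (subst sum.lessThan_Suc_shift) simp
  moreover have "(\<Sum>l<Suc m. G (l + a)) = (\<Sum>l<m. G (l + a)) + G (m + a)"
    by simp
  moreover have "G (m + a) = G a" using per[of a] by (simp add: add.commute)
  ultimately have "(\<Sum>l<m. G (Suc l + a)) = (\<Sum>l<m. G (l + a))" by linarith
  then show ?case using Suc by simp
qed

definition qq :: "nat \<Rightarrow> nat \<Rightarrow> real" where
  "qq d j = (if j mod (4*d) < 2*d then 1 else -1)"

lemma qq_per: "qq d (j + 4*d) = qq d j"
  by (simp add: qq_def)

lemma qq_sq: "(qq d j)^2 = 1"
  by (simp add: qq_def)

lemma base_sum:
  assumes "k \<le> 2*d"
  shows "(\<Sum>l<4*d. qq d l * qq d (l + k)) = 4*real d - 4*real k"
proof -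
  let ?f = "\<lambda>l. qq d l * qq d (l + k)"
  have s1: "sum ?f {0..<2*d-k} = real (2*d-k)"
  proof -
    have "sum ?f {0..<2*d-k} = sum (\<lambda>_. 1) {0..<2*d-k}"
      by (rule sum.cong) (auto simp: qq_def)
    then show ?thesis by simp
  qed
  have s2: "sum ?f {2*d-k..<2*d} = - real k"
  proof -
    have "sum ?f {2*d-k..<2*d} = sum (\<lambda>_. -1) {2*d-k..<2*d}"
    proof (rule sum.cong)
      fix l assume l: "l \<in> {2*d-k..<2*d}"
      have a: "l mod (4*d) = l" using l by auto
      have b: "(l+k) mod (4*d) = l + k" using l assms by auto
      have c: "\<not> l + k < 2*d" using l by auto
      show "?f l = -1" using a b c l assms by (simp add: qq_def)
    qed simp
    then show ?thesis using assms by simp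
  qed
  have s3: "sum ?f {2*d..<4*d-k} = real (2*d-k)"
  proof -
    have "sum ?f {2*d..<4*d-k} = sum (\<lambda>_. 1) {2*d..<4*d-k}"
    proof (rule sum.cong)
      fix l assume l: "l \<in> {2*d..<4*d-k}"
      have a: "l mod (4*d) = l" using l by auto
      have b: "(l+k) mod (4*d) = l + k" using l assms by auto
      show "?f l = 1" using a b l assms by (simp add: qq_def)
    qed simp
    then show ?thesis using assms by simp
  qed
  have s4: "sum ?f {4*d-k..<4*d} = - real k"
  proof -
    have "sum ?f {4*d-k..<4*d} = sum (\<lambda>_. -1) {4*d-k..<4*d}"
    proof (rule sum.cong)
      fix l assume l: "l \<in> {4*d-k..<4*d}"
      have a: "l mod (4*d) = l" using l by auto
      have e1: "l + k = (l + k - 4*d) + 4*d" "l + k - 4*d < 4*d" using l assms by auto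
      have b: "(l+k) mod (4*d) = l + k - 4*d"
        by (subst e1(1)) (simp add: e1(2))
      have c: "\<not> l < 2*d" "l + k - 4*d < 2*d" using l assms by auto
      show "?f l = -1" using a b c by (simp add: qq_def)
    qed simp
    then show ?thesis using assms by simp
  qed
  have "sum ?f {..<4*d} = sum ?f {0..<2*d-k} + sum ?f {2*d-k..<2*d}
        + sum ?f {2*d..<4*d-k} + sum ?f {4*d-k..<4*d}"
    using assms by (simp add: sum.atLeastLessThan_concat atLeast0LessThan[symmetric])
  also have "\<dots> = 4*real d - 4*real k" using s1 s2 s3 s4 assms by (simp add: of_nat_diff)
  finally show ?thesis .
qed

lemma colnorm_nonneg: "colnorm_max k (Suc n) X \<ge> 0"
proof -
  have "sqrt (\<Sum>l<k. (X l 0)\<^sup>2) \<le> colnorm_max k (Suc n) X"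
    unfolding colnorm_max_def by (rule Max_ge) auto
  moreover have "sqrt (\<Sum>l<k. (X l 0)\<^sup>2) \<ge> 0" by (simp add: sum_nonneg)
  ultimately show ?thesis by linarith
qed

theorem lemma4p18:
  fixes n d :: nat
  assumes "d \<ge> 1"
  shows "\<exists>M :: nat \<Rightarrow> nat \<Rightarrow> real.
           gamma2 (n+1) (n+1) M \<le> real d \<and>
           (\<forall>s\<le>n. \<forall>t\<le>n. \<bar>int s - int t\<bar> \<le> int d \<longrightarrow> M s t = real s - real t)"
proof -
  define X where "X = (\<lambda>l s. qq d (l + s) / 2)"
  define Y where "Y = (\<lambda>l t. qq d (l + t + d) / 2)"
  define M where "M = (\<lambda>s t. \<Sum>l<4*d. X l s * Y l t)"
  have col: "colnorm_max (4*d) (n+1) Z = sqrt (real d)" if "\<And>l i. (Z l i)^2 = 1/4" for Z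
  proof -
    have "(\<Sum>l<4*d. (Z l i)\<^sup>2) = real d" for i
    proof -
      have "(\<Sum>l<4*d. (Z l i)\<^sup>2) = (\<Sum>l<4*d. 1/4)"
        by (rule sum.cong) (simp_all add: that)
      then show ?thesis by simp
    qed
    then have "(\<lambda>i. sqrt (\<Sum>l<4*d. (Z l i)\<^sup>2)) ` {..<n+1} = {sqrt (real d)}"
      by auto
    then show ?thesis unfolding colnorm_max_def by simp
  qed
  have cX: "colnorm_max (4*d) (n+1) X = sqrt (real d)"
    by (rule col) (simp add: X_def power_divide qq_sq)
  have cY: "colnorm_max (4*d) (n+1) Y = sqrt (real d)"
    by (rule col) (simp add: Y_def power_divide qq_sq)
  let ?S = "{colnorm_max k (n+1) X * colnorm_max k (n+1) Y | k X Y.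
      \<forall>i<n+1. \<forall>j<n+1. M i j = (\<Sum>l<k. X l i * Y l j)}"
  have mem: "real d \<in> ?S"
  proof -
    have "real d = colnorm_max (4*d) (n+1) X * colnorm_max (4*d) (n+1) Y"
      using cX cY by simp
    then show ?thesis unfolding M_def by blast
  qed
  have bdd: "bdd_below ?S"
    by (rule bdd_belowI[of _ 0]) (auto intro!: mult_nonneg_nonneg colnorm_nonneg[simplified])
  have g: "gamma2 (n+1) (n+1) M \<le> real d"
    unfolding gamma2_def by (rule cInf_lower[OF mem bdd])
  have e: "M s t = real s - real t" if "\<bar>int s - int t\<bar> \<le> int d" for s t
  proof -
    define k where "k = t + d - s"
    have k: "k \<le> 2*d" "t + d = s + k" using that unfolding k_def by auto
    have "M s t = (\<Sum>l<4*d. qq d (l + s) * qq d (l + s + k)) / 4"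
      unfolding M_def X_def Y_def by (simp add: sum_divide_distrib k(2) add.assoc)
    also have "(\<Sum>l<4*d. qq d (l + s) * qq d (l + s + k)) = (\<Sum>l<4*d. qq d l * qq d (l + k))"
    proof -
      have per: "\<And>j. qq d (j + 4*d) * qq d (j + 4*d + k) = qq d j * qq d (j + k)"
      proof -
        fix j
        have "j + 4*d + k = (j + k) + 4*d" by simp
        then show "qq d (j + 4*d) * qq d (j + 4*d + k) = qq d j * qq d (j + k)"
          by (simp only: qq_per)
      qed
      have "(\<Sum>l<4*d. qq d (l + s) * qq d (l + s + k)) = (\<Sum>l<4*d. qq d l * qq d (l + k))"
        using periodic_sum[of "\<lambda>j. qq d j * qq d (j + k)" "4*d" s, OF per] by (simp only: add.assoc)
      then show ?thesis .
    qed
    also have "\<dots> = 4*real d - 4*real k" by (rule base_sum[OF k(1)])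
    finally have "M s t = (4*real d - 4*real k) / 4" .
    moreover have "real t + real d = real s + real k" using k(2) by (metis of_nat_add)
    ultimately show ?thesis by simp
  qed
  show ?thesis using g e by blast
qed

end
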